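(* Let $s$ be a Nash equilibrium in an $n$-resource selection game $G=\bigl((f_j)_{j=1}^n;(\mu^{R})_{\emptyset\ne R\subseteq[n]}\bigr)$, and let $P^s=\arg\max_{j\in[n]}h^s_j$ (the set of all maximizers). Then: (a) $P^s=P_G$; (b) $h^s_j=h_G$ for every $j\in P^s$; (c) $s_j(R)=0$ for every nonempty $R\subseteq[n]$ with $R\not\subseteq P^s$ and every $j\in P^s$; (d) if $P^s\ne[n]$, the map $s'$ defined for nonempty $R'\subseteq[n]\setminus P^s$ and $j\in[n]\setminus P^s$ by $s'_j(R')=\sum_{R:\,R\setminus P^s=R'}s_j(R)$ is a Nash equilibrium of the game $G-P^s$, and $h^{s'}_j=h^s_j$ for every $j\in[n]\setminus P^s$.
   Context: An $n$-resource selection game is $G=\bigl((f_j)_{j=1}^n;(\mu^{R})_{\emptyset\ne R\subseteq[n]}\bigr)$ with each $f_j:[0,\infty)\to\mathbb{R}$ nondecreasing and each $\mu^R\ge0$. A consumption profile assigns to each nonempty $R$ a vector $s(R)\in[0,\infty)^{[n]}$ with $s_j(R)=0$ for $j\notin R$ and $\sum_j s_j(R)=\mu^R$; loads $\mu^s_j=\sum_R s_j(R)$, costs $h^s_j=f_j(\mu^s_j)$; $s$ is a Nash equilibrium if for every $R$, every $k$ with $s_k(R)>0$ and every $j\in R$, $h^s_k\le h^s_j$. Equalization: for nondecreasing $g_1,\ldots,g_m:[0,\infty)\to\mathbb{R}\cup\{\mathrm{undefined}\}$, $\mathrm{eq}(g_1,\ldots,g_m)(\mu)=g_1(\mu_1)$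 if there exist $\mu_1,\ldots,\mu_m\ge0$ summing to $\mu$ with $g_1(\mu_1)=\cdots=g_m(\mu_m)\in\mathbb{R}$, else $\mathrm{undefined}$. For nonempty $S\subseteq[n]$: $E_G(S)=\mathrm{eq}(f_k:k\in S)\bigl(\sum_{\emptyset\ne R\subseteq S}\mu^R\bigr)$; $M_G(S)$ is the set of nonempty $S'\subseteq S$ such that for every $0\le\mu\le\sum_{R\subseteq S,\,R\cap S'\ne\emptyset}\mu^R$, $\mathrm{eq}(f_k:k\in S')(\mu)\ne E_G(S)$ ($\mathrm{undefined}$ differs from every real); $D_G=\{S: E_G(S)\in\mathbb{R},\ M_G(S)=\emptyset\}$; $h_G=\max_{S\in D_G}E_G(S)$; $P_G=\bigcup\{S\in D_G:E_G(S)=h_G\}$. Resource removal: for $S\subsetneq[n]$, $G-S$ is the $|[n]\setminus S|$-resource selection game with resources $[n]\setminus S$, cost functions $(f_j)_{j\notin S}$, and mass $\sum_{R:\,R\setminus S=R'}\mu^R$ for each nonempty $R'\subseteq[n]\setminus S$. *)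

theory Defs
  imports Complex_Main
begin

text \<open>A resource selection game on a finite resource set N (the paper's [n], or [n] minus
  removed resources): cost functions f j (j in N), masses mu R for nonempty R subseteq N.\<close>

definition nonempty_subsets :: "nat set \<Rightarrow> nat set set" where
  "nonempty_subsets N = {R. R \<subseteq> N \<and> R \<noteq> {}}"

definition is_game :: "nat set \<Rightarrow> (nat \<Rightarrow> real \<Rightarrow> real) \<Rightarrow> (nat set \<Rightarrow> real) \<Rightarrow> bool" where
  "is_game N f mu \<longleftrightarrow> finite N \<and> (\<forall>j\<in>N. mono_on {0..} (f j))
      \<and> (\<forall>R\<in>nonempty_subsets N. mu R \<ge> 0)"

text \<open>Consumption profile: s R j is the consumption of population R on resource j.\<close>
definition is_profile :: "nat set \<Rightarrow> (nat set \<Rightarrow> real) \<Rightarrow> (nat set \<Rightarrow> nat \<Rightarrow> real) \<Rightarrow> bool" where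
  "is_profile N mu s \<longleftrightarrow> (\<forall>R\<in>nonempty_subsets N.
      (\<forall>j\<in>N. s R j \<ge> 0) \<and> (\<forall>j\<in>N - R. s R j = 0) \<and> (\<Sum>j\<in>N. s R j) = mu R)"

definition load :: "nat set \<Rightarrow> (nat set \<Rightarrow> nat \<Rightarrow> real) \<Rightarrow> nat \<Rightarrow> real" where
  "load N s j = (\<Sum>R\<in>nonempty_subsets N. s R j)"

definition cost :: "nat set \<Rightarrow> (nat \<Rightarrow> real \<Rightarrow> real) \<Rightarrow> (nat set \<Rightarrow> nat \<Rightarrow> real) \<Rightarrow> nat \<Rightarrow> real" where
  "cost N f s j = f j (load N s j)"

definition is_nash :: "nat set \<Rightarrow> (nat \<Rightarrow> real \<Rightarrow> real) \<Rightarrow> (nat set \<Rightarrow> real) \<Rightarrow> (nat set \<Rightarrow> nat \<Rightarrow> real) \<Rightarrow> bool" where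
  "is_nash N f mu s \<longleftrightarrow> is_profile N mu s \<and>
     (\<forall>R\<in>nonempty_subsets N. \<forall>k\<in>N. \<forall>j\<in>R. s R k > 0 \<longrightarrow> cost N f s k \<le> cost N f s j)"

text \<open>Equalization of (f k : k in S) at total mass m; None encodes "undefined".\<close>
definition equalizes :: "nat set \<Rightarrow> (nat \<Rightarrow> real \<Rightarrow> real) \<Rightarrow> real \<Rightarrow> real \<Rightarrow> bool" where
  "equalizes S f m c \<longleftrightarrow> (\<exists>x::nat \<Rightarrow> real. (\<forall>k\<in>S. x k \<ge> 0) \<and> (\<Sum>k\<in>S. x k) = m
      \<and> (\<forall>k\<in>S. f k (x k) = c))"

definition eqz :: "nat set \<Rightarrow> (nat \<Rightarrow> real \<Rightarrow> real) \<Rightarrow> real \<Rightarrow> real option" where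
  "eqz S f m = (if \<exists>c. equalizes S f m c then Some (SOME c. equalizes S f m c) else None)"

definition E_G :: "(nat \<Rightarrow> real \<Rightarrow> real) \<Rightarrow> (nat set \<Rightarrow> real) \<Rightarrow> nat set \<Rightarrow> real option" where
  "E_G f mu S = eqz S f (\<Sum>R\<in>nonempty_subsets S. mu R)"

definition M_G :: "(nat \<Rightarrow> real \<Rightarrow> real) \<Rightarrow> (nat set \<Rightarrow> real) \<Rightarrow> nat set \<Rightarrow> nat set set" where
  "M_G f mu S = {S'\<in>nonempty_subsets S. \<forall>m. 0 \<le> m \<and>
      m \<le> (\<Sum>R\<in>{R. R \<subseteq> S \<and> R \<inter> S' \<noteq> {}}. mu R) \<longrightarrow> eqz S' f m \<noteq> E_G f mu S}"

definition D_G :: "nat set \<Rightarrow> (nat \<Rightarrow> real \<Rightarrow> real) \<Rightarrow> (nat set \<Rightarrow> real) \<Rightarrow> nat set set" where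
  "D_G N f mu = {S\<in>nonempty_subsets N. E_G f mu S \<noteq> None \<and> M_G f mu S = {}}"

definition h_G :: "nat set \<Rightarrow> (nat \<Rightarrow> real \<Rightarrow> real) \<Rightarrow> (nat set \<Rightarrow> real) \<Rightarrow> real" where
  "h_G N f mu = Max ((\<lambda>S. the (E_G f mu S)) ` D_G N f mu)"

definition P_G :: "nat set \<Rightarrow> (nat \<Rightarrow> real \<Rightarrow> real) \<Rightarrow> (nat set \<Rightarrow> real) \<Rightarrow> nat set" where
  "P_G N f mu = \<Union>{S\<in>D_G N f mu. the (E_G f mu S) = h_G N f mu}"

text \<open>Resource removal G - S: masses of the reduced game on resources N - S.\<close>
definition remove_mu :: "nat set \<Rightarrow> (nat set \<Rightarrow> real) \<Rightarrow> nat set \<Rightarrow> nat set \<Rightarrow> real" where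
  "remove_mu N mu S R' = (\<Sum>R\<in>{R\<in>nonempty_subsets N. R - S = R'}. mu R)"

definition argmax_cost :: "nat set \<Rightarrow> (nat \<Rightarrow> real \<Rightarrow> real) \<Rightarrow> (nat set \<Rightarrow> nat \<Rightarrow> real) \<Rightarrow> nat set" where
  "argmax_cost N f s = {j\<in>N. \<forall>i\<in>N. cost N f s i \<le> cost N f s j}"

end

theory Submission
  imports Defs
begin

lemma ns_finite: "finite N \<Longrightarrow> finite (nonempty_subsets N)"
  unfolding nonempty_subsets_def by (rule finite_subset[of _ "Pow N"]) auto

lemma eq_lt:
  assumes fin: "finite S" and ne: "S \<noteq> {}" and mono: "\<And>k. k\<in>S \<Longrightarrow> mono_on {0..} (f k)"
    and eq: "equalizes S f m c" and l: "\<And>k. k\<in>S \<Longrightarrow> 0 \<le> l k \<and> f k (l k) < c"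
  shows "sum l S < m"
proof -
  obtain x where x: "\<forall>k\<in>S. x k \<ge> 0" "(\<Sum>k\<in>S. x k) = m" "\<forall>k\<in>S. f k (x k) = c"
    using eq unfolding equalizes_def by blast
  have "l k < x k" if k: "k\<in>S" for k
  proof (rule ccontr)
    assume "\<not> l k < x k"
    hence "x k \<le> l k" by simp
    hence "f k (x k) \<le> f k (l k)" using mono[OF k] x(1) k l[OF k]
      by (auto simp: mono_on_def)
    thus False using x(3) k l[OF k] by auto
  qed
  hence "sum l S < sum x S" using fin ne by (intro sum_strict_mono) auto
  thus ?thesis using x(2) by simp
qed

lemma eq_unique:
  assumes fin: "finite S" and ne: "S \<noteq> {}" and mono: "\<And>k. k\<in>S \<Longrightarrow> mono_on {0..} (f k)"
    and e1: "equalizes S f m c1" and e2: "equalizes S f m c2"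
  shows "c1 = c2"
proof -
  have *: False if e1: "equalizes S f m a" and e2: "equalizes S f m b" and lt: "a < b" for a b
  proof -
    obtain x where x: "\<forall>k\<in>S. x k \<ge> 0" "(\<Sum>k\<in>S. x k) = m" "\<forall>k\<in>S. f k (x k) = a"
      using e1 unfolding equalizes_def by blast
    have "sum x S < m" using eq_lt[OF fin ne mono e2, of x] x lt by auto
    thus False using x(2) by simp
  qed
  show ?thesis using *[OF e1 e2] *[OF e2 e1] by fastforce
qed

lemma eqz_Some:
  assumes fin: "finite S" and ne: "S \<noteq> {}" and mono: "\<And>k. k\<in>S \<Longrightarrow> mono_on {0..} (f k)"
    and e: "equalizes S f m c"
  shows "eqz S f m = Some c"
proof -
  have "equalizes S f m (SOME c. equalizes S f m c)" using e by (rule someI)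
  hence "(SOME c. equalizes S f m c) = c" using eq_unique[OF fin ne mono _ e] by blast
  thus ?thesis using e unfolding eqz_def by auto
qed

lemma eqz_SomeD: "eqz S f m = Some c \<Longrightarrow> equalizes S f m c"
  unfolding eqz_def by (auto split: if_splits intro: someI_ex)

locale rsg =
  fixes N :: "nat set" and f :: "nat \<Rightarrow> real \<Rightarrow> real" and mu :: "nat set \<Rightarrow> real"
    and s :: "nat set \<Rightarrow> nat \<Rightarrow> real"
  assumes fin: "finite N" and mono: "\<And>j. j\<in>N \<Longrightarrow> mono_on {0..} (f j)"
    and nash: "is_nash N f mu s"
begin

lemma nsf: "finite (nonempty_subsets N)" using ns_finite[OF fin] .

lemma s_nn: "R\<in>nonempty_subsets N \<Longrightarrow> k\<in>N \<Longrightarrow> 0 \<le> s R k"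
  using nash unfolding is_nash_def is_profile_def by blast

lemma s_out: "R\<in>nonempty_subsets N \<Longrightarrow> k\<in>N \<Longrightarrow> k\<notin>R \<Longrightarrow> s R k = 0"
  using nash unfolding is_nash_def is_profile_def by blast

lemma s_sum: "R\<in>nonempty_subsets N \<Longrightarrow> sum (s R) N = mu R"
  using nash unfolding is_nash_def is_profile_def by blast

lemma s_nash: "R\<in>nonempty_subsets N \<Longrightarrow> k\<in>N \<Longrightarrow> j\<in>R \<Longrightarrow> s R k > 0 \<Longrightarrow> cost N f s k \<le> cost N f s j"
  using nash unfolding is_nash_def by blast

lemma load_nn: "k\<in>N \<Longrightarrow> 0 \<le> load N s k"
  unfolding load_def by (auto intro: sum_nonneg s_nn)

lemma sum_load: "sum (load N s) T = (\<Sum>R\<in>nonempty_subsets N. sum (s R) T)"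
  unfolding load_def by (rule sum.swap)

lemma mass_le:
  assumes T: "T \<subseteq> N" and F: "F \<subseteq> nonempty_subsets N"
    and z: "\<And>R k. R\<in>F \<Longrightarrow> k\<in>N - T \<Longrightarrow> s R k = 0"
  shows "sum mu F \<le> sum (load N s) T"
proof -
  have "sum mu F = (\<Sum>R\<in>F. sum (s R) T)"
  proof (rule sum.cong[OF refl])
    fix R assume R: "R\<in>F"
    have "sum (s R) N = sum (s R) T" using fin T z[OF R] by (intro sum.mono_neutral_right) auto
    thus "mu R = sum (s R) T" using s_sum R F by auto
  qed
  also have "\<dots> \<le> (\<Sum>R\<in>nonempty_subsets N. sum (s R) T)"
    using nsf F T by (intro sum_mono2) (auto intro!: sum_nonneg s_nn)
  finally show ?thesis by (simp add: sum_load)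
qed

end
context rsg
begin

definition hh where "hh = Max (cost N f s ` N)"
abbreviation PP where "PP \<equiv> argmax_cost N f s"

lemma cost_le: "j\<in>N \<Longrightarrow> cost N f s j \<le> hh"
  unfolding hh_def using fin by auto

lemma PP_eq: "N \<noteq> {} \<Longrightarrow> PP = {j\<in>N. cost N f s j = hh}"
proof -
  assume ne: "N \<noteq> {}"
  have "hh \<in> cost N f s ` N" unfolding hh_def using fin ne by (intro Max_in) auto
  thus ?thesis unfolding argmax_cost_def using cost_le by (auto intro: antisym)
qed

lemma PP_ne: "N \<noteq> {} \<Longrightarrow> PP \<noteq> {}"
proof -
  assume ne: "N \<noteq> {}"
  have "hh \<in> cost N f s ` N" unfolding hh_def using fin ne by (intro Max_in) auto
  thus ?thesis using PP_eq[OF ne] by auto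
qed

lemma PP_sub: "PP \<subseteq> N" unfolding argmax_cost_def by auto

lemma cost_lt: "N \<noteq> {} \<Longrightarrow> j\<in>N - PP \<Longrightarrow> cost N f s j < hh"
  using PP_eq cost_le by (metis (mono_tags, lifting) Diff_iff mem_Collect_eq order_le_less)

lemma c_part:
  assumes R: "R\<in>nonempty_subsets N" and nsub: "\<not> R \<subseteq> PP" and j: "j\<in>PP"
  shows "s R j = 0"
proof (rule ccontr)
  assume "s R j \<noteq> 0"
  hence pos: "s R j > 0" using s_nn[OF R] j PP_sub by force
  obtain i where i: "i\<in>R" "i\<notin>PP" using nsub by blast
  have iN: "i\<in>N" using R i unfolding nonempty_subsets_def by auto
  have "cost N f s j \<le> cost N f s i" using s_nash[OF R _ i(1) pos] j PP_sub by auto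
  moreover have "cost N f s i < cost N f s j" using i iN j unfolding argmax_cost_def by force
  ultimately show False by simp
qed

lemma P_in_D:
  assumes ne: "N \<noteq> {}"
  shows "PP \<in> D_G N f mu" "E_G f mu PP = Some hh"
proof -
  have Pns: "PP \<in> nonempty_subsets N" using PP_ne[OF ne] PP_sub unfolding nonempty_subsets_def by auto
  have finP: "finite PP" using fin PP_sub finite_subset by blast
  have monoP: "\<And>k. k\<in>PP \<Longrightarrow> mono_on {0..} (f k)" using mono PP_sub by auto
  have nsPN: "nonempty_subsets PP \<subseteq> nonempty_subsets N" using PP_sub unfolding nonempty_subsets_def by auto
  have le1: "sum mu (nonempty_subsets PP) \<le> sum (load N s) PP"
  proof (rule mass_le[OF PP_sub nsPN])
    fix R k assume "R \<in> nonempty_subsets PP" "k \<in> N - PP"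
    moreover hence "R \<in> nonempty_subsets N" "k \<notin> R" using nsPN unfolding nonempty_subsets_def by auto
    ultimately show "s R k = 0" using s_out by auto
  qed
  have "sum (load N s) PP = (\<Sum>R\<in>nonempty_subsets PP. sum (s R) PP)"
    unfolding sum_load
  proof (rule sum.mono_neutral_right[OF nsf nsPN], rule ballI)
    fix R assume "R \<in> nonempty_subsets N - nonempty_subsets PP"
    hence "R\<in>nonempty_subsets N" "\<not> R \<subseteq> PP" unfolding nonempty_subsets_def by auto
    thus "sum (s R) PP = 0" using c_part by auto
  qed
  also have "\<dots> \<le> (\<Sum>R\<in>nonempty_subsets PP. mu R)"
  proof (rule sum_mono)
    fix R assume R: "R \<in> nonempty_subsets PP"
    hence RN: "R\<in>nonempty_subsets N" using nsPN by auto
    have "sum (s R) PP \<le> sum (s R) N" using fin PP_sub by (intro sum_mono2) (auto intro: s_nn[OF RN])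
    thus "sum (s R) PP \<le> mu R" using s_sum[OF RN] by simp
  qed
  finally have eqsum: "sum (load N s) PP = sum mu (nonempty_subsets PP)" using le1 by simp
  have "equalizes PP f (sum mu (nonempty_subsets PP)) hh"
    unfolding equalizes_def
    by (rule exI[of _ "load N s"]) (use eqsum load_nn PP_sub PP_eq[OF ne] in \<open>auto simp: cost_def\<close>)
  thus EP: "E_G f mu PP = Some hh" unfolding E_G_def using eqz_Some[where f=f, OF finP PP_ne[OF ne] monoP] by blast
  have "M_G f mu PP = {}"
  proof (rule ccontr)
    assume "M_G f mu PP \<noteq> {}"
    then obtain S' where S': "S' \<in> nonempty_subsets PP"
      and H: "\<forall>m. 0 \<le> m \<and> m \<le> (\<Sum>R\<in>{R. R \<subseteq> PP \<and> R \<inter> S' \<noteq> {}}. mu R) \<longrightarrow> eqz S' f m \<noteq> E_G f mu PP"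
      unfolding M_G_def by blast
    define F where "F = {R. R \<subseteq> PP \<and> R \<inter> S' \<noteq> {}}"
    have S'P: "S' \<subseteq> PP" "S' \<noteq> {}" using S' unfolding nonempty_subsets_def by auto
    have finS': "finite S'" using finP S'P finite_subset by blast
    have FN: "F \<subseteq> nonempty_subsets N" unfolding F_def nonempty_subsets_def using PP_sub by auto
    define m where "m = sum (load N s) S'"
    have m0: "0 \<le> m" unfolding m_def using S'P PP_sub by (auto intro!: sum_nonneg load_nn)
    have "m = (\<Sum>R\<in>F. sum (s R) S')" unfolding m_def sum_load
    proof (rule sum.mono_neutral_right[OF nsf FN], rule ballI)
      fix R assume R: "R \<in> nonempty_subsets N - F"
      hence RN: "R\<in>nonempty_subsets N" by auto
      show "sum (s R) S' = 0"
      proof (cases "R \<subseteq> PP")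
        case True
        hence "R \<inter> S' = {}" using R unfolding F_def by auto
        thus ?thesis using S'P PP_sub by (auto intro!: sum.neutral s_out[OF RN])
      next
        case False
        thus ?thesis using S'P by (auto intro!: sum.neutral c_part[OF RN])
      qed
    qed
    also have "\<dots> \<le> sum mu F"
    proof (rule sum_mono)
      fix R assume R: "R \<in> F"
      hence RN: "R\<in>nonempty_subsets N" using FN by auto
      have "sum (s R) S' \<le> sum (s R) N" using fin S'P PP_sub by (intro sum_mono2) (auto intro: s_nn[OF RN])
      thus "sum (s R) S' \<le> mu R" using s_sum[OF RN] by simp
    qed
    finally have mle: "m \<le> sum mu F" .
    have "equalizes S' f m hh" unfolding equalizes_def m_def
      by (rule exI[of _ "load N s"]) (use load_nn S'P PP_sub PP_eq[OF ne] in \<open>auto simp: cost_def\<close>)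
    hence "eqz S' f m = Some hh" using eqz_Some[OF finS' S'P(2)] mono S'P PP_sub by blast
    thus False using H m0 mle EP unfolding F_def by auto
  qed
  thus "PP \<in> D_G N f mu" unfolding D_G_def using Pns EP by auto
qed

lemma D_le:
  assumes ne: "N \<noteq> {}" and S: "S \<in> D_G N f mu"
  shows "the (E_G f mu S) \<le> hh"
proof (rule ccontr)
  assume "\<not> the (E_G f mu S) \<le> hh"
  hence gt: "hh < the (E_G f mu S)" by simp
  have SN: "S \<in> nonempty_subsets N" "E_G f mu S \<noteq> None" using S unfolding D_G_def by auto
  then obtain c where c: "E_G f mu S = Some c" by auto
  have Ssub: "S \<subseteq> N" "S \<noteq> {}" using SN unfolding nonempty_subsets_def by auto
  have finS: "finite S" using fin Ssub finite_subset by blast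
  have eq: "equalizes S f (sum mu (nonempty_subsets S)) c" using c eqz_SomeD unfolding E_G_def by auto
  have "sum (load N s) S < sum mu (nonempty_subsets S)"
    using eq_lt[OF finS Ssub(2) _ eq, of "load N s"] mono Ssub load_nn cost_le gt c
    by (force simp: cost_def)
  moreover have "sum mu (nonempty_subsets S) \<le> sum (load N s) S"
  proof (rule mass_le[OF Ssub(1)])
    show "nonempty_subsets S \<subseteq> nonempty_subsets N" using Ssub unfolding nonempty_subsets_def by auto
    fix R k assume "R \<in> nonempty_subsets S" "k \<in> N - S"
    moreover hence "R \<in> nonempty_subsets N" "k \<notin> R" using Ssub unfolding nonempty_subsets_def by auto
    ultimately show "s R k = 0" using s_out by auto
  qed
  ultimately show False by simp
qed

lemma hG: "N \<noteq> {} \<Longrightarrow> h_G N f mu = hh"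
proof -
  assume ne: "N \<noteq> {}"
  have "finite (D_G N f mu)" using nsf unfolding D_G_def by auto
  thus ?thesis unfolding h_G_def using P_in_D[OF ne] D_le[OF ne]
    by (intro Max_eqI) (auto intro: image_eqI[of hh _ PP])
qed

lemma D_sub:
  assumes ne: "N \<noteq> {}" and S: "S \<in> D_G N f mu" and Sh: "the (E_G f mu S) = hh"
  shows "S \<subseteq> PP"
proof (rule ccontr)
  assume nsub: "\<not> S \<subseteq> PP"
  define S' where "S' = S - PP"
  have SN: "S \<in> nonempty_subsets N" "E_G f mu S \<noteq> None" "M_G f mu S = {}" using S unfolding D_G_def by auto
  hence ES: "E_G f mu S = Some hh" using Sh by auto
  have Ssub: "S \<subseteq> N" using SN unfolding nonempty_subsets_def by auto
  have S'ne: "S' \<noteq> {}" using nsub unfolding S'_def by auto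
  have S'ns: "S' \<in> nonempty_subsets S" using S'ne unfolding S'_def nonempty_subsets_def by auto
  have finS': "finite S'" using fin Ssub unfolding S'_def using finite_subset by blast
  obtain m where m: "0 \<le> m" "m \<le> (\<Sum>R\<in>{R. R \<subseteq> S \<and> R \<inter> S' \<noteq> {}}. mu R)" "eqz S' f m = E_G f mu S"
    using SN(3) S'ns unfolding M_G_def by blast
  have eq: "equalizes S' f m hh" using m(3) ES eqz_SomeD by simp
  have "sum (load N s) S' < m"
    using eq_lt[OF finS' S'ne _ eq, of "load N s"] mono Ssub load_nn cost_lt[OF ne]
    unfolding S'_def by (force simp: cost_def)
  moreover have "sum mu {R. R \<subseteq> S \<and> R \<inter> S' \<noteq> {}} \<le> sum (load N s) S'"
  proof (rule mass_le)
    show "S' \<subseteq> N" using Ssub unfolding S'_def by auto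
    show "{R. R \<subseteq> S \<and> R \<inter> S' \<noteq> {}} \<subseteq> nonempty_subsets N" using Ssub unfolding nonempty_subsets_def by auto
    fix R k assume R: "R \<in> {R. R \<subseteq> S \<and> R \<inter> S' \<noteq> {}}" and k: "k \<in> N - S'"
    have RN: "R\<in>nonempty_subsets N" using R Ssub unfolding nonempty_subsets_def by auto
    show "s R k = 0"
    proof (cases "k \<in> R")
      case False thus ?thesis using s_out[OF RN] k by auto
    next
      case True
      hence kP: "k\<in>PP" using R k unfolding S'_def by auto
      have "\<not> R \<subseteq> PP" using R unfolding S'_def by auto
      thus ?thesis using c_part[OF RN _ kP] by auto
    qed
  qed
  ultimately show False using m(2) by simp
qed

lemma PG: "N \<noteq> {} \<Longrightarrow> P_G N f mu = PP"
proof -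
  assume ne: "N \<noteq> {}"
  show ?thesis unfolding P_G_def hG[OF ne]
  proof
    show "\<Union> {S \<in> D_G N f mu. the (E_G f mu S) = hh} \<subseteq> PP" using D_sub[OF ne] by blast
    show "PP \<subseteq> \<Union> {S \<in> D_G N f mu. the (E_G f mu S) = hh}" using P_in_D[OF ne] by auto
  qed
qed

end
context rsg
begin

lemma part_d:
  "is_nash (N - PP) f (remove_mu N mu PP) (\<lambda>R' j. \<Sum>R\<in>{R\<in>nonempty_subsets N. R - PP = R'}. s R j)
   \<and> (\<forall>j\<in>N - PP. cost (N - PP) f (\<lambda>R' j. \<Sum>R\<in>{R\<in>nonempty_subsets N. R - PP = R'}. s R j) j = cost N f s j)"
  (is "is_nash ?N' f ?mu' ?s' \<and> ?C")
proof -
  let ?G = "\<lambda>R'. {R\<in>nonempty_subsets N. R - PP = R'}"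
  have finG: "finite (?G R')" for R' using nsf by auto
  have loadeq: "load ?N' ?s' j = load N s j" if j: "j \<in> ?N'" for j
  proof -
    let ?S = "{R\<in>nonempty_subsets N. R - PP \<noteq> {}}"
    have "load ?N' ?s' j = (\<Sum>y\<in>nonempty_subsets ?N'. \<Sum>R\<in>{x. x \<in> ?S \<and> x - PP = y}. s R j)"
      unfolding load_def
      by (rule sum.cong[OF refl], rule sum.cong) (auto simp: nonempty_subsets_def)
    also have "\<dots> = (\<Sum>R\<in>?S. s R j)"
      using nsf ns_finite[of ?N'] fin by (intro sum.group) (auto simp: nonempty_subsets_def)
    also have "\<dots> = load N s j" unfolding load_def
    proof (rule sym, rule sum.mono_neutral_right[OF nsf], force, rule ballI)
      fix R assume R: "R \<in> nonempty_subsets N - ?S"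
      hence "R\<in>nonempty_subsets N" "j \<notin> R" using j by auto
      thus "s R j = 0" using s_out j by auto
    qed
    finally show ?thesis .
  qed
  have costeq: "cost ?N' f ?s' j = cost N f s j" if "j \<in> ?N'" for j
    unfolding cost_def using loadeq[OF that] by simp
  have prof: "is_profile ?N' ?mu' ?s'"
    unfolding is_profile_def
  proof (intro ballI conjI)
    fix R' assume R': "R' \<in> nonempty_subsets ?N'"
    have R'ne: "R' \<noteq> {}" using R' unfolding nonempty_subsets_def by auto
    show "0 \<le> ?s' R' j" if "j\<in>?N'" for j using that by (auto intro!: sum_nonneg s_nn)
    show "?s' R' j = 0" if j: "j\<in>?N' - R'" for j
    proof (rule sum.neutral, rule ballI)
      fix R assume R: "R \<in> ?G R'"
      hence "j \<notin> R" using j by auto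
      thus "s R j = 0" using R j s_out by auto
    qed
    have "sum (?s' R') ?N' = (\<Sum>R\<in>?G R'. sum (s R) ?N')" by (rule sum.swap)
    also have "\<dots> = (\<Sum>R\<in>?G R'. mu R)"
    proof (rule sum.cong[OF refl])
      fix R assume R: "R \<in> ?G R'"
      hence RN: "R\<in>nonempty_subsets N" and nsub: "\<not> R \<subseteq> PP" using R'ne by auto
      have "sum (s R) N = sum (s R) ?N'"
        using fin by (intro sum.mono_neutral_right) (auto intro: c_part[OF RN nsub])
      thus "sum (s R) ?N' = mu R" using s_sum[OF RN] by simp
    qed
    finally show "sum (?s' R') ?N' = ?mu' R'" unfolding remove_mu_def .
  qed
  have "cost ?N' f ?s' k \<le> cost ?N' f ?s' j"
    if R': "R' \<in> nonempty_subsets ?N'" and k: "k \<in> ?N'" and j: "j \<in> R'" and pos: "?s' R' k > 0"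
    for R' k j
  proof -
    obtain R where R: "R \<in> ?G R'" and sR: "s R k > 0"
    proof (rule ccontr)
      assume "\<not> thesis"
      hence "\<forall>R\<in>?G R'. s R k \<le> 0" using that by (meson not_less)
      hence "?s' R' k \<le> 0" by (intro sum_nonpos) auto
      thus False using pos by simp
    qed
    have jN': "j \<in> ?N'" using R' j unfolding nonempty_subsets_def by auto
    have "cost N f s k \<le> cost N f s j" using s_nash[of R k j] R sR k j by auto
    thus ?thesis using costeq[OF k] costeq[OF jN'] by simp
  qed
  hence "is_nash ?N' f ?mu' ?s'" unfolding is_nash_def using prof by blast
  thus ?thesis using costeq by blast
qed

end

theorem mainTheorem14:
  fixes n :: nat and f :: "nat \<Rightarrow> real \<Rightarrow> real" and mu :: "nat set \<Rightarrow> real"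
    and s :: "nat set \<Rightarrow> nat \<Rightarrow> real"
  assumes game: "is_game {1..n} f mu"
    and nash: "is_nash {1..n} f mu s"
  defines "Ps \<equiv> argmax_cost {1..n} f s"
  shows "Ps = P_G {1..n} f mu
    \<and> (\<forall>j\<in>Ps. cost {1..n} f s j = h_G {1..n} f mu)
    \<and> (\<forall>R\<in>nonempty_subsets {1..n}. \<not> R \<subseteq> Ps \<longrightarrow> (\<forall>j\<in>Ps. s R j = 0))
    \<and> (Ps \<noteq> {1..n} \<longrightarrow>
         (let s' = (\<lambda>R' j. \<Sum>R\<in>{R\<in>nonempty_subsets {1..n}. R - Ps = R'}. s R j)
          in is_nash ({1..n} - Ps) f (remove_mu {1..n} mu Ps) s'
             \<and> (\<forall>j\<in>{1..n} - Ps. cost ({1..n} - Ps) f s' j = cost {1..n} f s j)))"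
proof -
  interpret rsg "{1..n}" f mu s
    using game nash unfolding is_game_def by unfold_locales auto
  show ?thesis
  proof (cases "n = 0")
    case True
    hence "Ps = {}" "P_G {1..n} f mu = {}"
      unfolding Ps_def argmax_cost_def P_G_def D_G_def nonempty_subsets_def by auto
    thus ?thesis using True by simp
  next
    case False
    hence ne: "{1..n} \<noteq> {}" by auto
    have a: "Ps = P_G {1..n} f mu" using PG[OF ne] unfolding Ps_def by simp
    have b: "\<forall>j\<in>Ps. cost {1..n} f s j = h_G {1..n} f mu"
      using hG[OF ne] PP_eq[OF ne] unfolding Ps_def by auto
    have c: "\<forall>R\<in>nonempty_subsets {1..n}. \<not> R \<subseteq> Ps \<longrightarrow> (\<forall>j\<in>Ps. s R j = 0)"
      using c_part unfolding Ps_def by blast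
    show ?thesis using a b c part_d unfolding Ps_def Let_def by blast
  qed
qed

end
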